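(* The assignment $\varphi(\ast)=\ast$, $\varphi(1)={\tt M}$, $\varphi(s)(v,w)=(w{\tt l},v{\tt r})$, $\varphi(N)(v)=v{\tt t}$, $\varphi(T_2)(v,w)=(v{\tt t},w{\tt t})$, $\varphi(T_3)(v,w,z)=(v{\tt t},w{\tt t},z{\tt t})$, and $\varphi(\rho)=\langle\varphi({\tt s}_2\rho),\varphi({\tt t}_2\rho)\rangle$ for each $3$-generator $\rho\in R_3$, extends in a unique way to a $3$-functor $\varphi:\mathbf{Toff}\to\mathbf{Move}$.
   Context: $\mathbf{Toff}$ is the free strict $3$-category generated by: one $0$-cell $\ast$; one $1$-generator, the wire $1:\ast\to\ast$; four $2$-generators $s:2\Rightarrow2$ (SWAP), $N:1\Rightarrow1$ (NOT), $T_2:2\Rightarrow2$, $T_3:3\Rightarrow3$; and the set $R_3$ of $3$-generators listed below. Write $\star_0$ for parallel composition (left to right), $\star_1$ for sequential composition (diagrammatic order), $1$ also for the identity $2$-cell on one wire and $\mathrm{id}_n$ for the identity $2$-cell on $n$ wires. Let $L_3=(s\star_01)\star_1(1\star_0s)$, $L_4=(s\star_01\star_01)\star_1(1\star_0s\star_01)\star_1(1\star_01\star_0s)$, $L'_3=(1\star_0s)\star_1(s\star_01)$, $L'_4=(1\star_01\star_0s)\star_1(1\star_0s\star_01)\star_1(s\star_01\star_01)$. $R_3$ consists of: $s\star_1s\Rrightarrow\mathrm{id}_2$; $(s\star_01)\star_1(1\star_0s)\star_1(s\star_01)\Rrightarrow(1\star_0s)\star_1(s\star_01)\star_1(1\star_0s)$;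 $N\star_1N\Rrightarrow\mathrm{id}_1$; $T_2\star_1T_2\Rrightarrow\mathrm{id}_2$; $T_3\star_1T_3\Rrightarrow\mathrm{id}_3$; $s\star_1(N\star_01)\Rrightarrow(1\star_0N)\star_1s$; $s\star_1(1\star_0N)\Rrightarrow(N\star_01)\star_1s$; $L_3\star_1(T_2\star_01)\Rrightarrow(1\star_0T_2)\star_1L_3$; $L'_3\star_1(1\star_0T_2)\Rrightarrow(T_2\star_01)\star_1L'_3$; $L_4\star_1(T_3\star_01)\Rrightarrow(1\star_0T_3)\star_1L_4$; $L'_4\star_1(1\star_0T_3)\Rrightarrow(T_3\star_01)\star_1L'_4$; $(s\star_01)\star_1T_3\Rrightarrow T_3\star_1(s\star_01)$. Cells are taken modulo the strict $3$-category axioms. $\mathbf{Move}$: ${\tt M}$ is the free monoid on letters ${\tt l},{\tt r},{\tt t}$ (words written left to right, concatenation $v{\tt t}$ appends ${\tt t}$), ordered by $<_{\tt M}$: first by length, then lexicographically with ${\tt t}<{\tt r}<{\tt l}$; ${\tt M}^n$ carries the product order ($\vec x<_{{\tt M}^n}\vec y$ iff componentwise $\le_{\tt M}$ and $\vec x\ne\vec y$). $\mathbf{Move}$ has one $0$-cell $\ast$, $1$-cells ${\tt M}^n$ (${\tt M}^n\star_0{\tt M}^m={\tt M}^{n+m}$), $2$-cells the strictly monotone maps ${\tt M}^n\to{\tt M}^n$ ($\star_0$ = cartesian product, $\star_1$ = composition of maps), and $3$-cells the pairs $\langle f,g\rangle$ with $f\ge_2 g$, where $f<_2g$ iff $f(\vec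 x)<_{{\tt M}^n}g(\vec x)$ for all $\vec x$, and $f\le_2 g$ iff $f=g$ or $f<_2 g$; compositions $\langle f,g\rangle\star_0\langle f',g'\rangle=\langle f\times f',g\times g'\rangle$, $\langle f,g\rangle\star_1\langle f',g'\rangle=\langle f'\circ f,g'\circ g\rangle$, $\langle f,g\rangle\star_2\langle g,h\rangle=\langle f,h\rangle$. *)

theory Defs
  imports Main
begin

text \<open>Letters of the free monoid M; words are lists, written left to right,
  so appending a letter c to a word v is v @ [c].\<close>
datatype mletter = lt | lr | ll

fun mrank :: "mletter \<Rightarrow> nat" where
  "mrank lt = 0" | "mrank lr = 1" | "mrank ll = 2"

fun lexless :: "mletter list \<Rightarrow> mletter list \<Rightarrow> bool" where
  "lexless (a # v) (b # w) = (mrank a < mrank b \<or> (a = b \<and> lexless v w))"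
| "lexless _ _ = False"

definition mless :: "mletter list \<Rightarrow> mletter list \<Rightarrow> bool" where
  "mless v w \<longleftrightarrow> length v < length w \<or> (length v = length w \<and> lexless v w)"

definition mle :: "mletter list \<Rightarrow> mletter list \<Rightarrow> bool" where
  "mle v w \<longleftrightarrow> v = w \<or> mless v w"

text \<open>Elements of M^n are lists of words of length n; product order.\<close>
definition vless :: "mletter list list \<Rightarrow> mletter list list \<Rightarrow> bool" where
  "vless x y \<longleftrightarrow> list_all2 mle x y \<and> x \<noteq> y"

text \<open>A 2-cell of Move on M^n (a strictly monotone map M^n -> M^n), represented
  canonically as a function on all lists that is the identity outside M^n.\<close>
definition move2 :: "nat \<Rightarrow> (mletter list list \<Rightarrow> mletter list list) \<Rightarrow> bool" where
  "move2 n f \<longleftrightarrow>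
     (\<forall>x. length x = n \<longrightarrow> length (f x) = n) \<and>
     (\<forall>x. length x \<noteq> n \<longrightarrow> f x = x) \<and>
     (\<forall>x y. length x = n \<longrightarrow> length y = n \<longrightarrow> vless x y \<longrightarrow> vless (f x) (f y))"

text \<open>Cartesian product of 2-cells (the 0-composition of Move).\<close>
definition mprod :: "nat \<Rightarrow> nat \<Rightarrow> (mletter list list \<Rightarrow> mletter list list)
     \<Rightarrow> (mletter list list \<Rightarrow> mletter list list) \<Rightarrow> (mletter list list \<Rightarrow> mletter list list)" where
  "mprod n m f g = (\<lambda>x. if length x = n + m then f (take n x) @ g (drop n x) else x)"

definition less2 :: "nat \<Rightarrow> (mletter list list \<Rightarrow> mletter list list)
     \<Rightarrow> (mletter list list \<Rightarrow> mletter list list) \<Rightarrow> bool" where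
  "less2 n f g \<longleftrightarrow> (\<forall>x. length x = n \<longrightarrow> vless (f x) (g x))"

definition move3 :: "nat \<Rightarrow> (mletter list list \<Rightarrow> mletter list list) \<times>
     (mletter list list \<Rightarrow> mletter list list) \<Rightarrow> bool" where
  "move3 n p \<longleftrightarrow> move2 n (fst p) \<and> move2 n (snd p) \<and>
     (fst p = snd p \<or> less2 n (snd p) (fst p))"

section \<open>The free 3-category Toff, as terms modulo the strict 3-category axioms\<close>

datatype gen2 = Swp | Nt | Tf2 | Tf3

fun garity :: "gen2 \<Rightarrow> nat" where
  "garity Swp = 2" | "garity Nt = 1" | "garity Tf2 = 2" | "garity Tf3 = 3"

text \<open>2-cell terms: generators, identity on n wires, star_0, star_1 (diagrammatic).
  All 2-cells of Toff are endo-2-cells n => n; ar2 gives n.\<close>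
datatype tm2 = G gen2 | I nat | C0 tm2 tm2 | C1 tm2 tm2

fun ar2 :: "tm2 \<Rightarrow> nat" where
  "ar2 (G g) = garity g"
| "ar2 (I n) = n"
| "ar2 (C0 a b) = ar2 a + ar2 b"
| "ar2 (C1 a b) = ar2 a"

fun wt2 :: "tm2 \<Rightarrow> bool" where
  "wt2 (G g) = True"
| "wt2 (I n) = True"
| "wt2 (C0 a b) = (wt2 a \<and> wt2 b)"
| "wt2 (C1 a b) = (wt2 a \<and> wt2 b \<and> ar2 a = ar2 b)"

text \<open>Equality of 2-cells in the free strict 2-category (one 0-cell).\<close>
inductive eq2 :: "tm2 \<Rightarrow> tm2 \<Rightarrow> bool" where
  e2_refl: "wt2 a \<Longrightarrow> eq2 a a"
| e2_sym: "wt2 b \<Longrightarrow> wt2 a \<Longrightarrow> eq2 a b \<Longrightarrow> eq2 b a"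
| e2_trans: "wt2 a \<Longrightarrow> wt2 c \<Longrightarrow> eq2 a b \<Longrightarrow> eq2 b c \<Longrightarrow> eq2 a c"
| e2_C0: "wt2 (C0 a b) \<Longrightarrow> wt2 (C0 a' b') \<Longrightarrow> eq2 a a' \<Longrightarrow> eq2 b b' \<Longrightarrow> eq2 (C0 a b) (C0 a' b')"
| e2_C1: "wt2 (C1 a b) \<Longrightarrow> wt2 (C1 a' b') \<Longrightarrow> eq2 a a' \<Longrightarrow> eq2 b b' \<Longrightarrow> eq2 (C1 a b) (C1 a' b')"
| e2_C0_assoc: "wt2 (C0 (C0 a b) c) \<Longrightarrow> wt2 (C0 a (C0 b c)) \<Longrightarrow> eq2 (C0 (C0 a b) c) (C0 a (C0 b c))"
| e2_C0_unitl: "wt2 (C0 (I 0) a) \<Longrightarrow> wt2 a \<Longrightarrow> eq2 (C0 (I 0) a) a"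
| e2_C0_unitr: "wt2 (C0 a (I 0)) \<Longrightarrow> wt2 a \<Longrightarrow> eq2 (C0 a (I 0)) a"
| e2_C1_assoc: "wt2 (C1 (C1 a b) c) \<Longrightarrow> wt2 (C1 a (C1 b c)) \<Longrightarrow> eq2 (C1 (C1 a b) c) (C1 a (C1 b c))"
| e2_C1_unitl: "wt2 (C1 (I (ar2 a)) a) \<Longrightarrow> wt2 a \<Longrightarrow> eq2 (C1 (I (ar2 a)) a) a"
| e2_C1_unitr: "wt2 (C1 a (I (ar2 a))) \<Longrightarrow> wt2 a \<Longrightarrow> eq2 (C1 a (I (ar2 a))) a"
| e2_I_C0: "wt2 (C0 (I n) (I m)) \<Longrightarrow> wt2 (I (n + m)) \<Longrightarrow> eq2 (C0 (I n) (I m)) (I (n + m))"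
| e2_xchg: "wt2 (C1 (C0 a b) (C0 c d)) \<Longrightarrow> wt2 (C0 (C1 a c) (C1 b d)) \<Longrightarrow> ar2 a = ar2 c \<Longrightarrow> ar2 b = ar2 d \<Longrightarrow>
     eq2 (C1 (C0 a b) (C0 c d)) (C0 (C1 a c) (C1 b d))"

datatype gen3 = R1 | R2 | R3 | R4 | R5 | R6 | R7 | R8 | R9 | R10 | R11 | R12

definition sw :: tm2 where "sw = G Swp"
definition w1 :: tm2 where "w1 = I 1"
definition tL3 :: tm2 where "tL3 = C1 (C0 sw w1) (C0 w1 sw)"
definition tL4 :: tm2 where
  "tL4 = C1 (C1 (C0 (C0 sw w1) w1) (C0 (C0 w1 sw) w1)) (C0 (C0 w1 w1) sw)"
definition tL3' :: tm2 where "tL3' = C1 (C0 w1 sw) (C0 sw w1)"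
definition tL4' :: tm2 where
  "tL4' = C1 (C1 (C0 (C0 w1 w1) sw) (C0 (C0 w1 sw) w1)) (C0 (C0 sw w1) w1)"

fun src_gen :: "gen3 \<Rightarrow> tm2" where
  "src_gen R1 = C1 sw sw"
| "src_gen R2 = C1 (C1 (C0 sw w1) (C0 w1 sw)) (C0 sw w1)"
| "src_gen R3 = C1 (G Nt) (G Nt)"
| "src_gen R4 = C1 (G Tf2) (G Tf2)"
| "src_gen R5 = C1 (G Tf3) (G Tf3)"
| "src_gen R6 = C1 sw (C0 (G Nt) w1)"
| "src_gen R7 = C1 sw (C0 w1 (G Nt))"
| "src_gen R8 = C1 tL3 (C0 (G Tf2) w1)"
| "src_gen R9 = C1 tL3' (C0 w1 (G Tf2))"
| "src_gen R10 = C1 tL4 (C0 (G Tf3) w1)"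
| "src_gen R11 = C1 tL4' (C0 w1 (G Tf3))"
| "src_gen R12 = C1 (C0 sw w1) (G Tf3)"

fun tgt_gen :: "gen3 \<Rightarrow> tm2" where
  "tgt_gen R1 = I 2"
| "tgt_gen R2 = C1 (C1 (C0 w1 sw) (C0 sw w1)) (C0 w1 sw)"
| "tgt_gen R3 = I 1"
| "tgt_gen R4 = I 2"
| "tgt_gen R5 = I 3"
| "tgt_gen R6 = C1 (C0 w1 (G Nt)) sw"
| "tgt_gen R7 = C1 (C0 (G Nt) w1) sw"
| "tgt_gen R8 = C1 (C0 w1 (G Tf2)) tL3"
| "tgt_gen R9 = C1 (C0 (G Tf2) w1) tL3'"
| "tgt_gen R10 = C1 (C0 w1 (G Tf3)) tL4"
| "tgt_gen R11 = C1 (C0 (G Tf3) w1) tL4'"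
| "tgt_gen R12 = C1 (G Tf3) (C0 sw w1)"

datatype tm3 = H gen3 | J tm2 | D0 tm3 tm3 | D1 tm3 tm3 | D2 tm3 tm3

fun src3 :: "tm3 \<Rightarrow> tm2" where
  "src3 (H r) = src_gen r"
| "src3 (J a) = a"
| "src3 (D0 x y) = C0 (src3 x) (src3 y)"
| "src3 (D1 x y) = C1 (src3 x) (src3 y)"
| "src3 (D2 x y) = src3 x"

fun tgt3 :: "tm3 \<Rightarrow> tm2" where
  "tgt3 (H r) = tgt_gen r"
| "tgt3 (J a) = a"
| "tgt3 (D0 x y) = C0 (tgt3 x) (tgt3 y)"
| "tgt3 (D1 x y) = C1 (tgt3 x) (tgt3 y)"
| "tgt3 (D2 x y) = tgt3 y"

definition ar3 :: "tm3 \<Rightarrow> nat" where "ar3 x = ar2 (src3 x)"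

fun wt3 :: "tm3 \<Rightarrow> bool" where
  "wt3 (H r) = True"
| "wt3 (J a) = wt2 a"
| "wt3 (D0 x y) = (wt3 x \<and> wt3 y)"
| "wt3 (D1 x y) = (wt3 x \<and> wt3 y \<and> ar3 x = ar3 y)"
| "wt3 (D2 x y) = (wt3 x \<and> wt3 y \<and> eq2 (tgt3 x) (src3 y))"

inductive eq3 :: "tm3 \<Rightarrow> tm3 \<Rightarrow> bool" where
  e3_refl: "wt3 x \<Longrightarrow> eq3 x x"
| e3_sym: "wt3 y \<Longrightarrow> wt3 x \<Longrightarrow> eq3 x y \<Longrightarrow> eq3 y x"
| e3_trans: "wt3 x \<Longrightarrow> wt3 z \<Longrightarrow> eq3 x y \<Longrightarrow> eq3 y z \<Longrightarrow> eq3 x z"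
| e3_D0: "wt3 (D0 x y) \<Longrightarrow> wt3 (D0 x' y') \<Longrightarrow> eq3 x x' \<Longrightarrow> eq3 y y' \<Longrightarrow> eq3 (D0 x y) (D0 x' y')"
| e3_D1: "wt3 (D1 x y) \<Longrightarrow> wt3 (D1 x' y') \<Longrightarrow> eq3 x x' \<Longrightarrow> eq3 y y' \<Longrightarrow> eq3 (D1 x y) (D1 x' y')"
| e3_D2: "wt3 (D2 x y) \<Longrightarrow> wt3 (D2 x' y') \<Longrightarrow> eq3 x x' \<Longrightarrow> eq3 y y' \<Longrightarrow> eq3 (D2 x y) (D2 x' y')"
| e3_J: "wt3 (J a) \<Longrightarrow> wt3 (J b) \<Longrightarrow> eq2 a b \<Longrightarrow> eq3 (J a) (J b)"
| e3_J_C0: "wt3 (J (C0 a b)) \<Longrightarrow> wt3 (D0 (J a) (J b)) \<Longrightarrow> eq3 (J (C0 a b)) (D0 (J a) (J b))"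
| e3_J_C1: "wt3 (J (C1 a b)) \<Longrightarrow> wt3 (D1 (J a) (J b)) \<Longrightarrow> eq3 (J (C1 a b)) (D1 (J a) (J b))"
| e3_D0_assoc: "wt3 (D0 (D0 x y) z) \<Longrightarrow> wt3 (D0 x (D0 y z)) \<Longrightarrow> eq3 (D0 (D0 x y) z) (D0 x (D0 y z))"
| e3_D0_unitl: "wt3 (D0 (J (I 0)) x) \<Longrightarrow> wt3 x \<Longrightarrow> eq3 (D0 (J (I 0)) x) x"
| e3_D0_unitr: "wt3 (D0 x (J (I 0))) \<Longrightarrow> wt3 x \<Longrightarrow> eq3 (D0 x (J (I 0))) x"
| e3_D1_assoc: "wt3 (D1 (D1 x y) z) \<Longrightarrow> wt3 (D1 x (D1 y z)) \<Longrightarrow> eq3 (D1 (D1 x y) z) (D1 x (D1 y z))"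
| e3_D1_unitl: "wt3 (D1 (J (I (ar3 x))) x) \<Longrightarrow> wt3 x \<Longrightarrow> eq3 (D1 (J (I (ar3 x))) x) x"
| e3_D1_unitr: "wt3 (D1 x (J (I (ar3 x)))) \<Longrightarrow> wt3 x \<Longrightarrow> eq3 (D1 x (J (I (ar3 x)))) x"
| e3_D2_assoc: "wt3 (D2 (D2 x y) z) \<Longrightarrow> wt3 (D2 x (D2 y z)) \<Longrightarrow> eq3 (D2 (D2 x y) z) (D2 x (D2 y z))"
| e3_D2_unitl: "wt3 (D2 (J (src3 x)) x) \<Longrightarrow> wt3 x \<Longrightarrow> eq3 (D2 (J (src3 x)) x) x"
| e3_D2_unitr: "wt3 (D2 x (J (tgt3 x))) \<Longrightarrow> wt3 x \<Longrightarrow> eq3 (D2 x (J (tgt3 x))) x"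
| e3_xchg01: "wt3 (D1 (D0 x y) (D0 x' y')) \<Longrightarrow> wt3 (D0 (D1 x x') (D1 y y')) \<Longrightarrow> ar3 x = ar3 x' \<Longrightarrow> ar3 y = ar3 y' \<Longrightarrow>
     eq3 (D1 (D0 x y) (D0 x' y')) (D0 (D1 x x') (D1 y y'))"
| e3_xchg02: "wt3 (D2 (D0 x y) (D0 x' y')) \<Longrightarrow> wt3 (D0 (D2 x x') (D2 y y')) \<Longrightarrow> eq2 (tgt3 x) (src3 x') \<Longrightarrow> eq2 (tgt3 y) (src3 y') \<Longrightarrow>
     eq3 (D2 (D0 x y) (D0 x' y')) (D0 (D2 x x') (D2 y y'))"
| e3_xchg12: "wt3 (D2 (D1 x y) (D1 x' y')) \<Longrightarrow> wt3 (D1 (D2 x x') (D2 y y')) \<Longrightarrow> ar3 x = ar3 y \<Longrightarrow> eq2 (tgt3 x) (src3 x') \<Longrightarrow> eq2 (tgt3 y) (src3 y') \<Longrightarrow>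
     eq3 (D2 (D1 x y) (D1 x' y')) (D1 (D2 x x') (D2 y y'))"

type_synonym mcell2 = "mletter list list \<Rightarrow> mletter list list"

text \<open>A 3-functor from Toff to Move sending the 1-cell n (n wires) to M^n:
  a map on 2-cell and 3-cell terms which lands in Move, preserves sources, targets,
  identities and all compositions, and respects the equalities of Toff.\<close>
definition is_3functor :: "(tm2 \<Rightarrow> mcell2) \<Rightarrow> (tm3 \<Rightarrow> mcell2 \<times> mcell2) \<Rightarrow> bool" where
  "is_3functor F2 F3 \<longleftrightarrow>
     (\<forall>a. wt2 a \<longrightarrow> move2 (ar2 a) (F2 a)) \<and>
     (\<forall>n. F2 (I n) = id) \<and>
     (\<forall>a b. wt2 (C0 a b) \<longrightarrow> F2 (C0 a b) = mprod (ar2 a) (ar2 b) (F2 a) (F2 b)) \<and>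
     (\<forall>a b. wt2 (C1 a b) \<longrightarrow> F2 (C1 a b) = F2 b \<circ> F2 a) \<and>
     (\<forall>a b. wt2 a \<longrightarrow> wt2 b \<longrightarrow> eq2 a b \<longrightarrow> F2 a = F2 b) \<and>
     (\<forall>x. wt3 x \<longrightarrow> move3 (ar3 x) (F3 x)) \<and>
     (\<forall>x. wt3 x \<longrightarrow> fst (F3 x) = F2 (src3 x) \<and> snd (F3 x) = F2 (tgt3 x)) \<and>
     (\<forall>a. wt2 a \<longrightarrow> F3 (J a) = (F2 a, F2 a)) \<and>
     (\<forall>x y. wt3 (D0 x y) \<longrightarrow> F3 (D0 x y) =
        (mprod (ar3 x) (ar3 y) (fst (F3 x)) (fst (F3 y)),
         mprod (ar3 x) (ar3 y) (snd (F3 x)) (snd (F3 y)))) \<and>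
     (\<forall>x y. wt3 (D1 x y) \<longrightarrow> F3 (D1 x y) =
        (fst (F3 y) \<circ> fst (F3 x), snd (F3 y) \<circ> snd (F3 x))) \<and>
     (\<forall>x y. wt3 (D2 x y) \<longrightarrow> F3 (D2 x y) = (fst (F3 x), snd (F3 y))) \<and>
     (\<forall>x y. wt3 x \<longrightarrow> wt3 y \<longrightarrow> eq3 x y \<longrightarrow> F3 x = F3 y)"

fun phiG :: "gen2 \<Rightarrow> mcell2" where
  "phiG Swp = (\<lambda>x. if length x = 2 then [x ! 1 @ [ll], x ! 0 @ [lr]] else x)"
| "phiG Nt = (\<lambda>x. if length x = 1 then [x ! 0 @ [lt]] else x)"
| "phiG Tf2 = (\<lambda>x. if length x = 2 then [x ! 0 @ [lt], x ! 1 @ [lt]] else x)"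
| "phiG Tf3 = (\<lambda>x. if length x = 3 then [x ! 0 @ [lt], x ! 1 @ [lt], x ! 2 @ [lt]] else x)"

definition extends_phi :: "(tm2 \<Rightarrow> mcell2) \<Rightarrow> (tm3 \<Rightarrow> mcell2 \<times> mcell2) \<Rightarrow> bool" where
  "extends_phi F2 F3 \<longleftrightarrow> is_3functor F2 F3 \<and>
     (\<forall>g. F2 (G g) = phiG g) \<and>
     (\<forall>r. F3 (H r) = (F2 (src_gen r), F2 (tgt_gen r)))"

end

theory Submission
  imports Defs
begin


lemma lexless_irrefl[simp]: "\<not> lexless v v"
  by (induction v) auto
lemma lexless_trans: "lexless u v \<Longrightarrow> lexless v w \<Longrightarrow> lexless u w"
proof (induction u arbitrary: v w)
  case Nil then show ?case by simp
next
  case (Cons a u) then show ?case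
    by (cases v; cases w) auto
qed
lemma lexless_app: "lexless v w \<Longrightarrow> lexless (v @ p) (w @ q)"
proof (induction v arbitrary: w)
  case Nil then show ?case by simp
next
  case (Cons a u) then show ?case by (cases w) auto
qed
lemma lexless_same[simp]: "lexless (v @ xs) (v @ ys) = lexless xs ys"
  by (induction v) auto

lemma mle_refl[simp]: "mle v v" by (simp add: mle_def)
lemma mless_irrefl: "\<not> mless v v" by (simp add: mless_def)
lemma mless_trans: "mless u v \<Longrightarrow> mless v w \<Longrightarrow> mless u w"
  unfolding mless_def using lexless_trans by auto
lemma mle_trans: "mle u v \<Longrightarrow> mle v w \<Longrightarrow> mle u w"
  unfolding mle_def using mless_trans by blast
lemma mle_antisym: "mle u v \<Longrightarrow> mle v u \<Longrightarrow> u = v"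
  unfolding mle_def using mless_trans mless_irrefl by blast
lemma mle_snoc: "mle v w \<Longrightarrow> mle (v @ [c]) (w @ [c])"
  unfolding mle_def mless_def using lexless_app by auto
lemma mle_same[simp]: "mle (v @ xs) (v @ ys) = mle xs ys"
  unfolding mle_def mless_def by auto
lemma mle_same2[simp]: "mle v (v @ ys)"
  using mle_same[of v "[]" ys] by (simp add: mle_def mless_def)

lemma vle_refl: "list_all2 mle x x" by (simp add: list_all2_refl)
lemma vle_trans: "list_all2 mle x y \<Longrightarrow> list_all2 mle y z \<Longrightarrow> list_all2 mle x z"
  using list_all2_trans[of mle mle mle] mle_trans by blast
lemma vle_antisym: "list_all2 mle x y \<Longrightarrow> list_all2 mle y x \<Longrightarrow> x = y"
proof (induction x arbitrary: y)
  case Nil then show ?case by simp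
next
  case (Cons a x) then show ?case by (cases y) (auto intro: mle_antisym)
qed
lemma vless_trans: "vless x y \<Longrightarrow> vless y z \<Longrightarrow> vless x z"
  unfolding vless_def using vle_trans vle_antisym by metis

fun phi2 :: "tm2 \<Rightarrow> mcell2" where
  "phi2 (G g) = phiG g"
| "phi2 (I n) = id"
| "phi2 (C0 a b) = mprod (ar2 a) (ar2 b) (phi2 a) (phi2 b)"
| "phi2 (C1 a b) = phi2 b \<circ> phi2 a"

lemma move2_le: "move2 n f \<Longrightarrow> length x = n \<Longrightarrow> length y = n \<Longrightarrow> list_all2 mle x y \<Longrightarrow> list_all2 mle (f x) (f y)"
  unfolding move2_def vless_def by (metis vle_refl)

lemma move2_id: "move2 n id" by (simp add: move2_def)
lemma move2_comp: "move2 n f \<Longrightarrow> move2 n g \<Longrightarrow> move2 n (g \<circ> f)"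
  unfolding move2_def by auto

lemma move2_mprod:
  assumes f: "move2 n f" and g: "move2 m g" shows "move2 (n+m) (mprod n m f g)"
proof -
  have lf: "length (f z) = n" if "length z = n" for z using f that by (simp add: move2_def)
  have lg: "length (g z) = m" if "length z = m" for z using g that by (simp add: move2_def)
  show ?thesis unfolding move2_def
  proof (intro conjI allI impI)
    fix x :: "mletter list list" assume "length x = n + m"
    then show "length (mprod n m f g x) = n + m" by (simp add: mprod_def lf lg)
  next
    fix x :: "mletter list list" assume "length x \<noteq> n + m"
    then show "mprod n m f g x = x" by (simp add: mprod_def)
  next
    fix x y :: "mletter list list" assume lx: "length x = n + m" and ly: "length y = n + m" and v: "vless x y"
    have a: "list_all2 mle (take n x) (take n y)" "list_all2 mle (drop n x) (drop n y)"
      using v by (auto simp: vless_def list_all2_takeI list_all2_dropI)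
    have b: "list_all2 mle (f (take n x)) (f (take n y))" "list_all2 mle (g (drop n x)) (g (drop n y))"
      using move2_le[OF f _ _ a(1)] move2_le[OF g _ _ a(2)] lx ly by auto
    have c: "take n x \<noteq> take n y \<or> drop n x \<noteq> drop n y"
      using v by (metis append_take_drop_id vless_def)
    have d: "f (take n x) \<noteq> f (take n y) \<or> g (drop n x) \<noteq> g (drop n y)"
      using c f g lx ly a unfolding move2_def vless_def by auto
    have e: "f (take n x) @ g (drop n x) \<noteq> f (take n y) @ g (drop n y)"
      using d lx ly lf lg by (auto simp: append_eq_append_conv)
    show "vless (mprod n m f g x) (mprod n m f g y)"
      using b e lx ly by (simp add: mprod_def vless_def list_all2_appendI)
  qed
qed

lemma len2: "length x = 2 \<Longrightarrow> \<exists>a b. x = [a,b]"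
  by (auto simp: length_Suc_conv numeral_eq_Suc)
lemma len1: "length x = 1 \<Longrightarrow> \<exists>a. x = [a]"
  by (auto simp: length_Suc_conv)
lemma len3: "length x = 3 \<Longrightarrow> \<exists>a b c. x = [a,b,c]"
  by (auto simp: length_Suc_conv numeral_eq_Suc)
lemma len4: "length x = 4 \<Longrightarrow> \<exists>a b c d. x = [a,b,c,d]"
  by (auto simp: length_Suc_conv numeral_eq_Suc)

lemma move2_phiG: "move2 (garity g) (phiG g)"
proof (cases g)
  case Swp
  have "vless (phiG Swp x) (phiG Swp y)" if "length x = 2" "length y = 2" "vless x y" for x y
    using len2[OF that(1)] len2[OF that(2)] that(3) by (auto simp: vless_def intro: mle_snoc)
  with Swp show ?thesis unfolding move2_def by auto
next
  case Nt
  have "vless (phiG Nt x) (phiG Nt y)" if "length x = 1" "length y = 1" "vless x y" for x y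
    using len1[OF that(1)] len1[OF that(2)] that(3) by (auto simp: vless_def intro: mle_snoc)
  with Nt show ?thesis unfolding move2_def by auto
next
  case Tf2
  have "vless (phiG Tf2 x) (phiG Tf2 y)" if "length x = 2" "length y = 2" "vless x y" for x y
    using len2[OF that(1)] len2[OF that(2)] that(3) by (auto simp: vless_def intro: mle_snoc)
  with Tf2 show ?thesis unfolding move2_def by auto
next
  case Tf3
  have "vless (phiG Tf3 x) (phiG Tf3 y)" if "length x = 3" "length y = 3" "vless x y" for x y
    using len3[OF that(1)] len3[OF that(2)] that(3) by (auto simp: vless_def intro: mle_snoc)
  with Tf3 show ?thesis unfolding move2_def by auto
qed

lemma wt2_move: "wt2 a \<Longrightarrow> move2 (ar2 a) (phi2 a)"
  by (induction a) (auto intro: move2_phiG move2_id move2_comp move2_mprod)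




lemma eq2_wt: "eq2 a b \<Longrightarrow> wt2 a \<and> wt2 b"
  by (induction rule: eq2.induct) auto
lemma eq2_ar: "eq2 a b \<Longrightarrow> ar2 a = ar2 b"
  by (induction rule: eq2.induct) auto

lemma mprod_assoc: "mprod (a + b) c (mprod a b f g) h = mprod a (b + c) f (mprod b c g h)"
  by (rule ext) (auto simp: mprod_def min_def add.assoc take_add drop_take add.commute)
lemma mprod_unitl: "move2 n f \<Longrightarrow> mprod 0 n id f = f"
  by (rule ext) (auto simp: mprod_def move2_def)
lemma mprod_unitr: "move2 n f \<Longrightarrow> mprod n 0 f id = f"
  by (rule ext) (auto simp: mprod_def move2_def)
lemma mprod_id: "mprod n m id id = id"
  by (rule ext) (auto simp: mprod_def)
lemma mprod_xchg: "move2 n fa \<Longrightarrow> move2 m fb \<Longrightarrow>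
   mprod n m fc fd \<circ> mprod n m fa fb = mprod n m (fc \<circ> fa) (fd \<circ> fb)"
  by (rule ext) (auto simp: mprod_def move2_def)

lemma eq2_phi: "eq2 a b \<Longrightarrow> phi2 a = phi2 b"
proof (induction rule: eq2.induct)
  case (e2_C0 a b a' b') then show ?case using eq2_ar by auto
next
  case (e2_C0_assoc a b c) then show ?case by (simp add: mprod_assoc)
next
  case (e2_C0_unitl a) then show ?case by (simp add: mprod_unitl wt2_move)
next
  case (e2_C0_unitr a) then show ?case by (simp add: mprod_unitr wt2_move)
next
  case (e2_I_C0 n m) then show ?case by (simp add: mprod_id)
next
  case (e2_xchg a b c d) then show ?case using mprod_xchg[OF wt2_move[of a] wt2_move[of b], of "phi2 c" "phi2 d"] by simp
qed (auto simp: comp_assoc)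

lemma wt3_st: "wt3 x \<Longrightarrow> wt2 (src3 x) \<and> wt2 (tgt3 x) \<and> ar2 (tgt3 x) = ar2 (src3 x)"
proof (induction x)
  case (H r) then show ?case
    by (cases r) (simp_all add: sw_def w1_def tL3_def tL4_def tL3'_def tL4'_def)
next
  case (D2 x y) then show ?case using eq2_ar by auto
qed (auto simp: ar3_def)

lemma eq3_wt: "eq3 x y \<Longrightarrow> wt3 x \<and> wt3 y"
  by (induction rule: eq3.induct) auto

lemma wst: "wt3 x \<Longrightarrow> wt2 (src3 x)" "wt3 x \<Longrightarrow> wt2 (tgt3 x)" "wt3 x \<Longrightarrow> ar2 (tgt3 x) = ar2 (src3 x)"
  using wt3_st by auto

lemma eq3_st: "eq3 x y \<Longrightarrow> eq2 (src3 x) (src3 y) \<and> eq2 (tgt3 x) (tgt3 y)"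
proof (induction rule: eq3.induct)
  case (e3_refl x) then show ?case using wst[of x] by (simp add: e2_refl)
next
  case (e3_sym y x) then show ?case using wst[of x] wst[of y] by (simp add: e2_sym)
next
  case (e3_trans x z y) then show ?case using wst[of x] wst[of z] by (meson e2_trans)
next
  case (e3_D0 x y x' y')
  then have "wt3 x" "wt3 y" "wt3 x'" "wt3 y'" by simp_all
  then show ?case using e3_D0.IH wst[of x] wst[of y] wst[of x'] wst[of y']
    by (simp add: e2_C0)
next
  case (e3_D1 x y x' y')
  then have "wt3 x" "wt3 y" "wt3 x'" "wt3 y'" "ar3 x = ar3 y" "ar3 x' = ar3 y'" by simp_all
  then show ?case using e3_D1.IH wst[of x] wst[of y] wst[of x'] wst[of y']
    by (simp add: e2_C1 ar3_def)
next
  case (e3_D2 x y x' y') then show ?case by simp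
next
  case (e3_J a b) then show ?case by simp
next
  case (e3_J_C0 a b) then show ?case by (simp add: e2_refl)
next
  case (e3_J_C1 a b) then show ?case by (simp add: e2_refl ar3_def)
next
  case (e3_D0_assoc x y z)
  then have "wt3 x" "wt3 y" "wt3 z" by simp_all
  then show ?case using wst[of x] wst[of y] wst[of z] by (simp add: e2_C0_assoc)
next
  case (e3_D0_unitl x)
  then show ?case using wst[of x] by (simp add: e2_C0_unitl)
next
  case (e3_D0_unitr x)
  then show ?case using wst[of x] by (simp add: e2_C0_unitr)
next
  case (e3_D1_assoc x y z)
  then have "wt3 x" "wt3 y" "wt3 z" "ar3 x = ar3 y" "ar3 y = ar3 z" by (simp_all add: ar3_def)
  then show ?case using wst[of x] wst[of y] wst[of z] by (simp add: e2_C1_assoc ar3_def)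
next
  case (e3_D1_unitl x)
  then have w: "wt3 x" by simp
  have a: "eq2 (C1 (I (ar2 (src3 x))) (src3 x)) (src3 x)"
    using wst[OF w] by (intro e2_C1_unitl) simp_all
  have b: "eq2 (C1 (I (ar2 (tgt3 x))) (tgt3 x)) (tgt3 x)"
    using wst[OF w] by (intro e2_C1_unitl) simp_all
  show ?case using a b wst[OF w] by (simp add: ar3_def)
next
  case (e3_D1_unitr x)
  then have w: "wt3 x" by simp
  have a: "eq2 (C1 (src3 x) (I (ar2 (src3 x)))) (src3 x)"
    using wst[OF w] by (intro e2_C1_unitr) simp_all
  have b: "eq2 (C1 (tgt3 x) (I (ar2 (tgt3 x)))) (tgt3 x)"
    using wst[OF w] by (intro e2_C1_unitr) simp_all
  show ?case using a b wst[OF w] by (simp add: ar3_def)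
next
  case (e3_D2_assoc x y z)
  then have "wt3 x" "wt3 z" by simp_all
  then show ?case using wst[of x] wst[of z] by (simp add: e2_refl)
next
  case (e3_D2_unitl x)
  then show ?case using wst[of x] by (simp add: e2_refl)
next
  case (e3_D2_unitr x)
  then show ?case using wst[of x] by (simp add: e2_refl)
next
  case (e3_xchg01 x y x' y')
  then have w: "wt3 x" "wt3 y" "wt3 x'" "wt3 y'" "ar3 x = ar3 x'" "ar3 y = ar3 y'" by simp_all
  have a: "eq2 (C1 (C0 (src3 x) (src3 y)) (C0 (src3 x') (src3 y'))) (C0 (C1 (src3 x) (src3 x')) (C1 (src3 y) (src3 y')))"
    using w wst[of x] wst[of y] wst[of x'] wst[of y'] by (intro e2_xchg) (simp_all add: ar3_def)
  have b: "eq2 (C1 (C0 (tgt3 x) (tgt3 y)) (C0 (tgt3 x') (tgt3 y'))) (C0 (C1 (tgt3 x) (tgt3 x')) (C1 (tgt3 y) (tgt3 y')))"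
    using w wst[of x] wst[of y] wst[of x'] wst[of y'] by (intro e2_xchg) (simp_all add: ar3_def)
  show ?case using a b by simp
next
  case (e3_xchg02 x y x' y')
  then have w: "wt3 x" "wt3 y" "wt3 x'" "wt3 y'" by simp_all
  then show ?case using wst[of x] wst[of y] wst[of x'] wst[of y'] by (simp add: e2_refl)
next
  case (e3_xchg12 x y x' y')
  then have w: "wt3 x" "wt3 y" "wt3 x'" "wt3 y'" "ar3 x = ar3 y" "ar3 x' = ar3 y'" by simp_all
  then show ?case using wst[of x] wst[of y] wst[of x'] wst[of y'] by (simp add: e2_refl ar3_def)
qed




definition ge2 :: "nat \<Rightarrow> mcell2 \<Rightarrow> mcell2 \<Rightarrow> bool" where
  "ge2 n f g \<longleftrightarrow> f = g \<or> less2 n g f"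

lemmas tdefs = sw_def w1_def tL3_def tL4_def tL3'_def tL4'_def

lemma less2I2: "n = 2 \<Longrightarrow> (\<And>a b. vless (g [a,b]) (f [a,b])) \<Longrightarrow> less2 n g f"
  unfolding less2_def using len2 by blast
lemma less2I1: "n = 1 \<Longrightarrow> (\<And>a. vless (g [a]) (f [a])) \<Longrightarrow> less2 n g f"
  unfolding less2_def using len1 by blast
lemma less2I3: "n = 3 \<Longrightarrow> (\<And>a b c. vless (g [a,b,c]) (f [a,b,c])) \<Longrightarrow> less2 n g f"
  unfolding less2_def using len3 by blast
lemma less2I4: "n = 4 \<Longrightarrow> (\<And>a b c d. vless (g [a,b,c,d]) (f [a,b,c,d])) \<Longrightarrow> less2 n g f"
  unfolding less2_def using len4 by blast

lemma gR1: "less2 2 (phi2 (tgt_gen R1)) (phi2 (src_gen R1))"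
  apply (simp add: tdefs)
  apply (rule less2I2)
  apply simp
  apply (simp add: mprod_def vless_def mle_def mless_def)
  done

lemma gR2: "less2 3 (phi2 (tgt_gen R2)) (phi2 (src_gen R2))"
  apply (simp add: tdefs)
  apply (rule less2I3)
  apply simp
  apply (simp add: mprod_def vless_def mle_def mless_def)
  done

lemma gR3: "less2 1 (phi2 (tgt_gen R3)) (phi2 (src_gen R3))"
  apply (simp add: tdefs)
  apply (rule less2I1)
  apply simp
  apply (simp add: mprod_def vless_def mle_def mless_def)
  done

lemma gR4: "less2 2 (phi2 (tgt_gen R4)) (phi2 (src_gen R4))"
  apply (simp add: tdefs)
  apply (rule less2I2)
  apply simp
  apply (simp add: mprod_def vless_def mle_def mless_def)
  done

lemma gR5: "less2 3 (phi2 (tgt_gen R5)) (phi2 (src_gen R5))"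
  apply (simp add: tdefs)
  apply (rule less2I3)
  apply simp
  apply (simp add: mprod_def vless_def mle_def mless_def)
  done

lemma gR6: "less2 2 (phi2 (tgt_gen R6)) (phi2 (src_gen R6))"
  apply (simp add: tdefs)
  apply (rule less2I2)
  apply simp
  apply (simp add: mprod_def vless_def mle_def mless_def)
  done

lemma gR7: "less2 2 (phi2 (tgt_gen R7)) (phi2 (src_gen R7))"
  apply (simp add: tdefs)
  apply (rule less2I2)
  apply simp
  apply (simp add: mprod_def vless_def mle_def mless_def)
  done

lemma gR8: "less2 3 (phi2 (tgt_gen R8)) (phi2 (src_gen R8))"
  apply (simp add: tdefs)
  apply (rule less2I3)
  apply simp
  apply (simp add: mprod_def vless_def mle_def mless_def)
  done

lemma gR9: "less2 3 (phi2 (tgt_gen R9)) (phi2 (src_gen R9))"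
  apply (simp add: tdefs)
  apply (rule less2I3)
  apply simp
  apply (simp add: mprod_def vless_def mle_def mless_def)
  done

lemma gR10: "less2 4 (phi2 (tgt_gen R10)) (phi2 (src_gen R10))"
  apply (simp add: tdefs)
  apply (rule less2I4)
  apply simp
  apply (simp add: mprod_def vless_def mle_def mless_def)
  done

lemma gR11: "less2 4 (phi2 (tgt_gen R11)) (phi2 (src_gen R11))"
  apply (simp add: tdefs)
  apply (rule less2I4)
  apply simp
  apply (simp add: mprod_def vless_def mle_def mless_def)
  done

lemma gR12: "less2 3 (phi2 (tgt_gen R12)) (phi2 (src_gen R12))"
  apply (simp add: tdefs)
  apply (rule less2I3)
  apply simp
  apply (simp add: mprod_def vless_def mle_def mless_def)
  done

lemma ar_src: "ar2 (src_gen R1) = 2" "ar2 (src_gen R2) = 3" "ar2 (src_gen R3) = 1" "ar2 (src_gen R4) = 2"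
  "ar2 (src_gen R5) = 3" "ar2 (src_gen R6) = 2" "ar2 (src_gen R7) = 2" "ar2 (src_gen R8) = 3"
  "ar2 (src_gen R9) = 3" "ar2 (src_gen R10) = 4" "ar2 (src_gen R11) = 4" "ar2 (src_gen R12) = 3"
  by (simp_all add: tdefs)

lemma gen_ge: "ge2 (ar2 (src_gen r)) (phi2 (src_gen r)) (phi2 (tgt_gen r))"
  unfolding ge2_def
  by (cases r) (simp_all only: gR1 gR2 gR3 gR4 gR5 gR6 gR7 gR8 gR9 gR10 gR11 gR12 ar_src simp_thms)

lemma ge2_trans: assumes a: "ge2 n f g" and b: "ge2 n g h" shows "ge2 n f h"
proof (cases "f = g")
  case True then show ?thesis using b by simp
next
  case False
  then have a': "less2 n g f" using a by (simp add: ge2_def)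
  show ?thesis
  proof (cases "g = h")
    case True then show ?thesis using a by simp
  next
    case False
    then have b': "less2 n h g" using b by (simp add: ge2_def)
    have "less2 n h f" unfolding less2_def
    proof (intro allI impI)
      fix x :: "mletter list list" assume "length x = n"
      then show "vless (h x) (f x)" using a' b' vless_trans[of "h x" "g x" "f x"] by (simp add: less2_def)
    qed
    then show ?thesis by (simp add: ge2_def)
  qed
qed

lemma vless_ne: "vless x y \<Longrightarrow> x \<noteq> y" by (simp add: vless_def)

lemma ge2_mprod:
  assumes mf: "move2 n f" "move2 n g" and mf': "move2 m f'" "move2 m g'"
    and a: "ge2 n f g" and b: "ge2 m f' g'"
  shows "ge2 (n+m) (mprod n m f f') (mprod n m g g')"
proof (cases "f = g \<and> f' = g'")
  case True then show ?thesis by (simp add: ge2_def)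
next
  case False
  have "vless (mprod n m g g' x) (mprod n m f f' x)" if lx: "length x = n + m" for x
  proof -
    have l1: "length (take n x) = n" "length (drop n x) = m" using lx by auto
    have le1: "list_all2 mle (g (take n x)) (f (take n x))"
      using a l1 unfolding ge2_def less2_def vless_def by (auto simp: vle_refl)
    have le2: "list_all2 mle (g' (drop n x)) (f' (drop n x))"
      using b l1 unfolding ge2_def less2_def vless_def by (auto simp: vle_refl)
    have ne: "g (take n x) \<noteq> f (take n x) \<or> g' (drop n x) \<noteq> f' (drop n x)"
      using False a b l1 unfolding ge2_def less2_def vless_def by auto
    have ln: "length (g (take n x)) = n" "length (f (take n x)) = n"
      using mf l1 by (auto simp: move2_def)
    have ne2: "g (take n x) @ g' (drop n x) \<noteq> f (take n x) @ f' (drop n x)" using ne ln by simp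
    show ?thesis using lx le1 le2 ne2 by (simp add: mprod_def vless_def list_all2_appendI)
  qed
  then show ?thesis by (simp add: ge2_def less2_def)
qed

lemma ge2_le: "ge2 n f g \<Longrightarrow> length x = n \<Longrightarrow> list_all2 mle (g x) (f x)"
  unfolding ge2_def less2_def vless_def using vle_refl by metis
lemma ge2_lt: "ge2 n f g \<Longrightarrow> f \<noteq> g \<Longrightarrow> length x = n \<Longrightarrow> vless (g x) (f x)"
  unfolding ge2_def less2_def by simp
lemma move2_lt: "move2 n f \<Longrightarrow> length x = n \<Longrightarrow> length y = n \<Longrightarrow> vless x y \<Longrightarrow> vless (f x) (f y)"
  unfolding move2_def by simp
lemma move2_len: "move2 n f \<Longrightarrow> length x = n \<Longrightarrow> length (f x) = n"
  unfolding move2_def by simp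

lemma ge2_comp:
  assumes mf: "move2 n f" "move2 n g" and mf': "move2 n f'" "move2 n g'"
    and a: "ge2 n f g" and b: "ge2 n f' g'"
  shows "ge2 n (f' \<circ> f) (g' \<circ> g)"
proof (cases "f = g \<and> f' = g'")
  case True then show ?thesis by (simp add: ge2_def)
next
  case False
  have "vless (g' (g x)) (f' (f x))" if lx: "length x = n" for x
  proof -
    have ly: "length (g x) = n" "length (f x) = n" using move2_len[OF mf(2) lx] move2_len[OF mf(1) lx] .
    have le1: "list_all2 mle (g x) (f x)" by (rule ge2_le[OF a lx])
    have le2: "list_all2 mle (g' (g x)) (g' (f x))" using move2_le[OF mf'(2) ly le1] .
    have le3: "list_all2 mle (g' (f x)) (f' (f x))" by (rule ge2_le[OF b ly(2)])
    have ne: "g' (g x) \<noteq> f' (f x)"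
    proof
      assume eq: "g' (g x) = f' (f x)"
      have "list_all2 mle (g' (f x)) (g' (g x))" using le3 unfolding eq[symmetric] .
      then have e2: "g' (g x) = g' (f x)" using vle_antisym[OF le2] by blast
      have e3: "g' (f x) = f' (f x)" using trans[OF e2[symmetric] eq] .
      show False
      proof (cases "f = g")
        case True
        then have "f' \<noteq> g'" using False by blast
        then have "vless (g' (f x)) (f' (f x))" by (rule ge2_lt[OF b _ ly(2)])
        then show False using e3 vless_ne by blast
      next
        case F: False
        then have "vless (g x) (f x)" by (rule ge2_lt[OF a _ lx])
        then have "vless (g' (g x)) (g' (f x))" by (rule move2_lt[OF mf'(2) ly])
        then show False using e2 vless_ne by blast
      qed
    qed
    show ?thesis using vle_trans[OF le2 le3] ne unfolding vless_def by blast
  qed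
  then have "less2 n (g' \<circ> g) (f' \<circ> f)" unfolding less2_def comp_def by blast
  then show ?thesis unfolding ge2_def by blast
qed

lemma wt3_ge: "wt3 x \<Longrightarrow> ge2 (ar3 x) (phi2 (src3 x)) (phi2 (tgt3 x))"
proof (induction x)
  case (H r) then show ?case using gen_ge[of r] by (simp add: ar3_def)
next
  case (J a) then show ?case by (simp add: ge2_def ar3_def)
next
  case (D0 x y)
  then have w: "wt3 x" "wt3 y" by auto
  note sx = wt3_st[OF w(1)] and sy = wt3_st[OF w(2)]
  have "ge2 (ar2 (src3 x) + ar2 (src3 y)) (mprod (ar2 (src3 x)) (ar2 (src3 y)) (phi2 (src3 x)) (phi2 (src3 y)))
          (mprod (ar2 (src3 x)) (ar2 (src3 y)) (phi2 (tgt3 x)) (phi2 (tgt3 y)))"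
    apply (rule ge2_mprod)
    using wt2_move[of "src3 x"] wt2_move[of "tgt3 x"] wt2_move[of "src3 y"] wt2_move[of "tgt3 y"]
      sx sy D0.IH w by (simp_all add: ar3_def)
  then show ?case using sx sy by (simp add: ar3_def)
next
  case (D1 x y)
  then have w: "wt3 x" "wt3 y" "ar3 x = ar3 y" by auto
  note sx = wt3_st[OF w(1)] and sy = wt3_st[OF w(2)]
  have "ge2 (ar3 x) (phi2 (src3 y) \<circ> phi2 (src3 x)) (phi2 (tgt3 y) \<circ> phi2 (tgt3 x))"
    apply (rule ge2_comp)
    using wt2_move[of "src3 x"] wt2_move[of "tgt3 x"] wt2_move[of "src3 y"] wt2_move[of "tgt3 y"]
      sx sy D1.IH w by (simp_all add: ar3_def)
  then show ?case by (simp add: ar3_def comp_def)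
next
  case (D2 x y)
  then have w: "wt3 x" "wt3 y" "eq2 (tgt3 x) (src3 y)" by auto
  have e: "phi2 (tgt3 x) = phi2 (src3 y)" "ar3 x = ar3 y"
    using eq2_phi[OF w(3)] eq2_ar[OF w(3)] wt3_st[OF w(1)] by (auto simp: ar3_def)
  have "ge2 (ar3 x) (phi2 (src3 x)) (phi2 (tgt3 y))"
    apply (rule ge2_trans[of _ _ "phi2 (tgt3 x)"])
    using D2.IH w e by auto
  then show ?case by (simp add: ar3_def comp_def)
qed



lemma existence: "extends_phi phi2 (\<lambda>x. (phi2 (src3 x), phi2 (tgt3 x)))"
  unfolding extends_phi_def is_3functor_def
proof (intro conjI allI impI)
  fix x assume w: "wt3 x"
  show "move3 (ar3 x) (phi2 (src3 x), phi2 (tgt3 x))"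
    unfolding move3_def fst_conv snd_conv
    using wst[OF w] wt2_move[of "src3 x"] wt2_move[of "tgt3 x"] wt3_ge[OF w]
    unfolding ge2_def ar3_def by simp
next
  fix x y assume w: "wt3 (D0 x y)"
  then have "wt3 x" "wt3 y" by simp_all
  then show "(\<lambda>x. (phi2 (src3 x), phi2 (tgt3 x))) (D0 x y) = (mprod (ar3 x) (ar3 y) (fst ((\<lambda>x. (phi2 (src3 x), phi2 (tgt3 x))) x)) (fst ((\<lambda>x. (phi2 (src3 x), phi2 (tgt3 x))) y)),
         mprod (ar3 x) (ar3 y) (snd ((\<lambda>x. (phi2 (src3 x), phi2 (tgt3 x))) x)) (snd ((\<lambda>x. (phi2 (src3 x), phi2 (tgt3 x))) y)))"
    using wst[of x] wst[of y] by (simp add: ar3_def)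
next
  fix x y assume "wt3 x" "wt3 y" "eq3 x y"
  then have "eq2 (src3 x) (src3 y)" "eq2 (tgt3 x) (tgt3 y)" using eq3_st by auto
  then show "(\<lambda>x. (phi2 (src3 x), phi2 (tgt3 x))) x = (\<lambda>x. (phi2 (src3 x), phi2 (tgt3 x))) y"
    using eq2_phi by simp
next
  fix a b assume "wt2 a" "wt2 b" "eq2 a b"
  then show "phi2 a = phi2 b" using eq2_phi by blast
next
  fix a assume "wt2 a" then show "move2 (ar2 a) (phi2 a)" by (rule wt2_move)
qed simp_all

lemma uniqueness:
  assumes e: "extends_phi F2' F3'"
  shows "(\<forall>a. wt2 a \<longrightarrow> F2' a = phi2 a) \<and> (\<forall>x. wt3 x \<longrightarrow> F3' x = (phi2 (src3 x), phi2 (tgt3 x)))"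
proof -
  have a: "F2' a = phi2 a" if "wt2 a" for a
    using that by (induction a) (use e in \<open>auto simp: extends_phi_def is_3functor_def\<close>)
  have b: "F3' x = (phi2 (src3 x), phi2 (tgt3 x))" if w: "wt3 x" for x
  proof -
    have "fst (F3' x) = F2' (src3 x) \<and> snd (F3' x) = F2' (tgt3 x)"
      using e w by (simp add: extends_phi_def is_3functor_def)
    then show ?thesis using a wt3_st[OF w] by (simp add: prod_eq_iff)
  qed
  show ?thesis using a b by simp
qed

theorem mainTheorem4:
  shows "\<exists>F2 F3. extends_phi F2 F3 \<and>
           (\<forall>F2' F3'. extends_phi F2' F3' \<longrightarrow>
              (\<forall>a. wt2 a \<longrightarrow> F2' a = F2 a) \<and> (\<forall>x. wt3 x \<longrightarrow> F3' x = F3 x))"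
  apply (rule exI, rule exI, rule conjI, rule existence)
  apply (intro allI impI)
  apply (drule uniqueness)
  apply simp
  done


end
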